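(* Let $G=(V,P,d)$ be a reversible metric Markov chain with non-negative Ollivier curvature. Assume $V=X\,\dot\cup\,K\,\dot\cup\,Y$ with $K$ a nonempty finite set and no $x\in X$, $y\in Y$ with $x\sim y$. Then there exists a 1-Lipschitz function $f$ and a constant $C$ such that (i) $\Delta f=C$ on $K$; (ii) $f=\min\{g\in\operatorname{Lip}(1): g|_K=f|_K\}$ on $X$; (iii) $f=\max\{g\in\operatorname{Lip}(1): g|_K=f|_K\}$ on $Y$. Moreover, $\Delta f\ge C$ on $X$ and $\Delta f\le C$ on $Y$.
   Context: A reversible metric Markov chain $G=(V,P,d)$: $V$ finite; $P:V\times V\to[0,\infty)$ with symmetric support; write $x\sim y$ iff $x\ne y$ and $P(x,y)>0$; $d:V\times V\to[0,\infty)$ is a path distance, i.e. $d(x,y)=\inf\{\sum_{k=1}^nd(x_{k-1},x_k): x=x_0\sim\dots\sim x_n=y\}$, finite for all $x,y$ (connectedness); there is a probability $m$ with $m(x)P(x,y)=m(y)P(y,x)$. $\operatorname{Lip}(1)=\{f:|f(y)-f(x)|\le d(x,y)\ \forall x,y\}$. $\Delta f(x)=\sum_yP(x,y)(f(y)-f(x))$. Ollivier curvature of $x\sim y$: $\kappa(x,y)=\inf\{(\Delta f(x)-\Delta f(y))/d(x,y): f\in\operatorname{Lip}(1),\ f(y)-f(x)=d(x,y)\}$; non-negative Ollivier curvature means $\kappa(x,y)\ge0$ for all $x\sim y$. *)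

theory Defs
  imports Complex_Main
begin

definition adj :: "('a \<Rightarrow> 'a \<Rightarrow> real) \<Rightarrow> 'a \<Rightarrow> 'a \<Rightarrow> bool" where
  "adj P x y \<longleftrightarrow> x \<noteq> y \<and> P x y > 0"

definition is_walk :: "'a set \<Rightarrow> ('a \<Rightarrow> 'a \<Rightarrow> real) \<Rightarrow> 'a list \<Rightarrow> 'a \<Rightarrow> 'a \<Rightarrow> bool" where
  "is_walk V P ps x y \<longleftrightarrow> ps \<noteq> [] \<and> hd ps = x \<and> last ps = y \<and> set ps \<subseteq> V \<and>
     (\<forall>i. Suc i < length ps \<longrightarrow> adj P (ps ! i) (ps ! Suc i))"

definition walk_length :: "('a \<Rightarrow> 'a \<Rightarrow> real) \<Rightarrow> 'a list \<Rightarrow> real" where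
  "walk_length d ps = (\<Sum>i<length ps - 1. d (ps ! i) (ps ! Suc i))"

definition rev_metric_markov_chain ::
  "'a set \<Rightarrow> ('a \<Rightarrow> 'a \<Rightarrow> real) \<Rightarrow> ('a \<Rightarrow> 'a \<Rightarrow> real) \<Rightarrow> bool" where
  "rev_metric_markov_chain V P d \<longleftrightarrow>
     finite V \<and>
     (\<forall>x\<in>V. \<forall>y\<in>V. P x y \<ge> 0) \<and>
     (\<forall>x\<in>V. \<forall>y\<in>V. P x y > 0 \<longleftrightarrow> P y x > 0) \<and>
     (\<forall>x\<in>V. \<forall>y\<in>V. d x y \<ge> 0) \<and>
     (\<forall>x\<in>V. \<forall>y\<in>V. x \<noteq> y \<longrightarrow> d x y > 0) \<and>
     (\<forall>x\<in>V. \<forall>y\<in>V. \<exists>ps. is_walk V P ps x y) \<and>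
     (\<forall>x\<in>V. \<forall>y\<in>V. d x y = Inf {walk_length d ps | ps. is_walk V P ps x y}) \<and>
     (\<exists>m. (\<forall>x\<in>V. m x \<ge> 0) \<and> (\<Sum>x\<in>V. m x) = 1 \<and>
          (\<forall>x\<in>V. \<forall>y\<in>V. m x * P x y = m y * P y x))"

definition Lip1 :: "'a set \<Rightarrow> ('a \<Rightarrow> 'a \<Rightarrow> real) \<Rightarrow> ('a \<Rightarrow> real) \<Rightarrow> bool" where
  "Lip1 V d f \<longleftrightarrow> (\<forall>x\<in>V. \<forall>y\<in>V. \<bar>f y - f x\<bar> \<le> d x y)"

definition laplacian :: "'a set \<Rightarrow> ('a \<Rightarrow> 'a \<Rightarrow> real) \<Rightarrow> ('a \<Rightarrow> real) \<Rightarrow> 'a \<Rightarrow> real" where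
  "laplacian V P f x = (\<Sum>y\<in>V. P x y * (f y - f x))"

definition ollivier_curv ::
  "'a set \<Rightarrow> ('a \<Rightarrow> 'a \<Rightarrow> real) \<Rightarrow> ('a \<Rightarrow> 'a \<Rightarrow> real) \<Rightarrow> 'a \<Rightarrow> 'a \<Rightarrow> real" where
  "ollivier_curv V P d x y =
     Inf {(laplacian V P f x - laplacian V P f y) / d x y | f. Lip1 V d f \<and> f y - f x = d x y}"

definition nonneg_ollivier_curv ::
  "'a set \<Rightarrow> ('a \<Rightarrow> 'a \<Rightarrow> real) \<Rightarrow> ('a \<Rightarrow> 'a \<Rightarrow> real) \<Rightarrow> bool" where
  "nonneg_ollivier_curv V P d \<longleftrightarrow>
     (\<forall>x\<in>V. \<forall>y\<in>V. adj P x y \<longrightarrow> ollivier_curv V P d x y \<ge> 0)"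

end

theory Submission
  imports Defs
begin

locale thm_setup =
  fixes V X K Y :: "'a set" and P d :: "'a \<Rightarrow> 'a \<Rightarrow> real"
  assumes mc: "rev_metric_markov_chain V P d"
    and curv: "nonneg_ollivier_curv V P d"
    and VXKY: "V = X \<union> K \<union> Y"
    and XK: "X \<inter> K = {}" and XY: "X \<inter> Y = {}" and KY: "K \<inter> Y = {}"
    and Kne: "K \<noteq> {}" and finK: "finite K"
    and nosep: "\<not> (\<exists>x\<in>X. \<exists>y\<in>Y. adj P x y)"
begin

lemma finV: "finite V" using mc unfolding rev_metric_markov_chain_def by blast
lemma Pnn: "x\<in>V \<Longrightarrow> y\<in>V \<Longrightarrow> P x y \<ge> 0" using mc unfolding rev_metric_markov_chain_def by blast
lemma Psym: "x\<in>V \<Longrightarrow> y\<in>V \<Longrightarrow> P x y > 0 \<longleftrightarrow> P y x > 0" using mc unfolding rev_metric_markov_chain_def by blast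
lemma dnn: "x\<in>V \<Longrightarrow> y\<in>V \<Longrightarrow> d x y \<ge> 0" using mc unfolding rev_metric_markov_chain_def by blast
lemma dpos: "x\<in>V \<Longrightarrow> y\<in>V \<Longrightarrow> x \<noteq> y \<Longrightarrow> d x y > 0" using mc unfolding rev_metric_markov_chain_def by blast
lemma walk_ex: "x\<in>V \<Longrightarrow> y\<in>V \<Longrightarrow> \<exists>ps. is_walk V P ps x y" using mc unfolding rev_metric_markov_chain_def by blast
lemma d_inf: "x\<in>V \<Longrightarrow> y\<in>V \<Longrightarrow> d x y = Inf {walk_length d ps | ps. is_walk V P ps x y}"
  using mc unfolding rev_metric_markov_chain_def by blast
lemma adj_sym: "u\<in>V \<Longrightarrow> v\<in>V \<Longrightarrow> adj P u v \<Longrightarrow> adj P v u" by (auto simp: adj_def Psym)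
lemma KV: "K \<subseteq> V" using VXKY by auto
lemma XV: "X \<subseteq> V" using VXKY by auto
lemma YV: "Y \<subseteq> V" using VXKY by auto

lemma walk_bound:
  assumes "is_walk V P ps x y" and loc: "\<forall>a\<in>V. \<forall>b\<in>V. adj P a b \<longrightarrow> \<bar>g b - g a\<bar> \<le> d a b"
  shows "\<bar>g y - g x\<bar> \<le> walk_length d ps"
proof -
  from assms have ne: "ps \<noteq> []" "hd ps = x" "last ps = y" "set ps \<subseteq> V"
    and ad: "\<forall>i. Suc i < length ps \<longrightarrow> adj P (ps!i) (ps!Suc i)" by (auto simp: is_walk_def)
  let ?n = "length ps - 1"
  have "g y - g x = (\<Sum>i<?n. g (ps ! Suc i) - g (ps ! i))"
    using sum_lessThan_telescope[of "\<lambda>i. g (ps!i)" ?n] ne by (simp add: last_conv_nth hd_conv_nth)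
  also have "\<bar>\<dots>\<bar> \<le> (\<Sum>i<?n. \<bar>g (ps ! Suc i) - g (ps ! i)\<bar>)" by (rule sum_abs)
  also have "\<dots> \<le> (\<Sum>i<?n. d (ps!i) (ps ! Suc i))"
  proof (rule sum_mono)
    fix i assume "i \<in> {..<?n}"
    then have i: "Suc i < length ps" by auto
    then have "ps!i \<in> V" "ps ! Suc i \<in> V" using ne(4) nth_mem[of i ps] nth_mem[of "Suc i" ps] by auto
    then show "\<bar>g (ps ! Suc i) - g (ps ! i)\<bar> \<le> d (ps!i) (ps!Suc i)"
      using loc ad i by blast
  qed
  finally show ?thesis by (simp add: walk_length_def)
qed

lemma loc_glob:
  assumes "\<forall>a\<in>V. \<forall>b\<in>V. adj P a b \<longrightarrow> \<bar>g b - g a\<bar> \<le> d a b"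
  shows "Lip1 V d g"
  unfolding Lip1_def
proof (intro ballI)
  fix x y assume xy: "x\<in>V" "y\<in>V"
  show "\<bar>g y - g x\<bar> \<le> d x y" unfolding d_inf[OF xy]
    apply (rule cInf_greatest) using walk_ex[OF xy] walk_bound[OF _ assms] by auto
qed

definition rho where "rho u v = Sup {g v - g u | g. Lip1 V d g}"

lemma Lip1_zero: "Lip1 V d (\<lambda>_. 0)" using dnn by (auto simp: Lip1_def)
lemma Lip1_neg: assumes "Lip1 V d g" shows "Lip1 V d (\<lambda>x. - g x)"
  unfolding Lip1_def
proof (intro ballI)
  fix x y assume xy: "x\<in>V" "y\<in>V"
  have "\<bar>g x - g y\<bar> \<le> d y x" "\<bar>g y - g x\<bar> \<le> d x y" using assms xy unfolding Lip1_def by blast+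
  then show "\<bar>(- g y) - (- g x)\<bar> \<le> d x y" by (simp add: abs_minus_commute)
qed
lemma Lip1_D1: assumes "Lip1 V d g" "x\<in>V" "y\<in>V" shows "g y - g x \<le> d x y"
proof -
  have "\<bar>g y - g x\<bar> \<le> d x y" using assms unfolding Lip1_def by blast
  then show ?thesis by (rule abs_le_D1)
qed
lemma Lip1_D2: assumes "Lip1 V d g" "x\<in>V" "y\<in>V" shows "g y - g x \<le> d y x"
proof -
  have "\<bar>g x - g y\<bar> \<le> d y x" using assms unfolding Lip1_def by blast
  then have "- (g x - g y) \<le> d y x" by (rule abs_le_D2)
  then show ?thesis by simp
qed

lemma rho_bdd: "u\<in>V \<Longrightarrow> v\<in>V \<Longrightarrow> bdd_above {g v - g u | g. Lip1 V d g}"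
  unfolding bdd_above_def using Lip1_D1 by blast
lemma rho_upper: "Lip1 V d g \<Longrightarrow> u\<in>V \<Longrightarrow> v\<in>V \<Longrightarrow> g v - g u \<le> rho u v"
  unfolding rho_def by (rule cSup_upper) (auto intro: rho_bdd)
lemma rho_least: "(\<And>g. Lip1 V d g \<Longrightarrow> g v - g u \<le> c) \<Longrightarrow> rho u v \<le> c"
  unfolding rho_def by (rule cSup_least) (use Lip1_zero in auto)
lemma rho_le_d1: "u\<in>V \<Longrightarrow> v\<in>V \<Longrightarrow> rho u v \<le> d u v" by (rule rho_least) (rule Lip1_D1)
lemma rho_le_d2: "u\<in>V \<Longrightarrow> v\<in>V \<Longrightarrow> rho u v \<le> d v u" by (rule rho_least) (rule Lip1_D2)
lemma rho_sym: assumes "u\<in>V" "v\<in>V" shows "rho u v = rho v u"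
proof -
  have "rho u v \<le> rho v u"
  proof (rule rho_least)
    fix g assume g: "Lip1 V d g"
    have "(- g u) - (- g v) \<le> rho v u" using rho_upper[OF Lip1_neg[OF g] assms(2) assms(1)] by simp
    then show "g v - g u \<le> rho v u" by simp
  qed
  moreover have "rho v u \<le> rho u v"
  proof (rule rho_least)
    fix g assume g: "Lip1 V d g"
    have "(- g v) - (- g u) \<le> rho u v" using rho_upper[OF Lip1_neg[OF g] assms(1) assms(2)] by simp
    then show "g u - g v \<le> rho u v" by simp
  qed
  ultimately show ?thesis by simp
qed
lemma rho_tri: assumes "u\<in>V" "v\<in>V" "w\<in>V" shows "rho u w \<le> rho u v + rho v w"
proof (rule rho_least)
  fix g assume g: "Lip1 V d g"
  have "g v - g u \<le> rho u v" "g w - g v \<le> rho v w" using rho_upper[OF g] assms by auto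
  then show "g w - g u \<le> rho u v + rho v w" by linarith
qed
lemma rho_refl: assumes "u\<in>V" shows "rho u u = 0"
proof -
  have "rho u u \<le> 0" by (rule rho_least) simp
  moreover have "0 \<le> rho u u" using rho_upper[OF Lip1_zero assms assms] by simp
  ultimately show ?thesis by simp
qed
lemma rho_nn: assumes "u\<in>V" "v\<in>V" shows "0 \<le> rho u v"
  using rho_tri[OF assms(1,2,1)] rho_refl[OF assms(1)] rho_sym[OF assms] by linarith

definition LipR where "LipR g \<longleftrightarrow> (\<forall>u\<in>V. \<forall>v\<in>V. g v - g u \<le> rho u v)"

lemma LipR_Lip1: "LipR g \<Longrightarrow> Lip1 V d g"
  unfolding Lip1_def LipR_def
proof (intro ballI)
  fix x y assume L: "\<forall>u\<in>V. \<forall>v\<in>V. g v - g u \<le> rho u v" and xy: "x\<in>V" "y\<in>V"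
  have "g y - g x \<le> d x y" using L xy rho_le_d1[OF xy] by fastforce
  moreover have "g x - g y \<le> rho y x" using L xy by blast
  moreover have "rho y x \<le> d x y" using rho_le_d1[OF xy] rho_sym[OF xy] by linarith
  ultimately show "\<bar>g y - g x\<bar> \<le> d x y" by simp
qed
lemma Lip1_LipR: "Lip1 V d g \<Longrightarrow> LipR g" unfolding LipR_def using rho_upper by blast

lemma lap_bound:
  assumes "Lip1 V d g" "w\<in>V" shows "\<bar>laplacian V P g w\<bar> \<le> (\<Sum>y\<in>V. P w y * d w y)"
proof -
  have "\<bar>laplacian V P g w\<bar> \<le> (\<Sum>y\<in>V. \<bar>P w y * (g y - g w)\<bar>)" unfolding laplacian_def by (rule sum_abs)
  also have "\<dots> \<le> (\<Sum>y\<in>V. P w y * d w y)"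
  proof (rule sum_mono)
    fix y assume y: "y\<in>V"
    have "\<bar>g y - g w\<bar> \<le> d w y" using assms y unfolding Lip1_def by blast
    then show "\<bar>P w y * (g y - g w)\<bar> \<le> P w y * d w y"
      using Pnn[OF assms(2) y] by (simp add: abs_mult mult_left_mono)
  qed
  finally show ?thesis .
qed

lemma lap_neg: "laplacian V P (\<lambda>x. - g x) w = - laplacian V P g w"
  unfolding laplacian_def by (simp add: sum_negf[symmetric] algebra_simps)

lemma curv_adj0:
  assumes f: "Lip1 V d f" and uv: "u\<in>V" "v\<in>V" "adj P u v" and t: "f v - f u = d u v"
  shows "laplacian V P f v \<le> laplacian V P f u"
proof -
  let ?S = "{(laplacian V P f x - laplacian V P f y) / d x y | f. Lip1 V d f \<and> f y - f x = d x y}"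
  define S where "S = {(laplacian V P g u - laplacian V P g v) / d u v | g. Lip1 V d g \<and> g v - g u = d u v}"
  have c0: "ollivier_curv V P d u v \<ge> 0" using curv uv unfolding nonneg_ollivier_curv_def by blast
  have duv: "d u v > 0" using dpos uv by (auto simp: adj_def)
  define Bd where "Bd = (\<Sum>y\<in>V. P u y * d u y) + (\<Sum>y\<in>V. P v y * d v y)"
  have bdd: "bdd_below S" unfolding bdd_below_def
  proof (intro exI ballI)
    fix s assume "s \<in> S"
    then obtain g where g: "Lip1 V d g" and s: "s = (laplacian V P g u - laplacian V P g v) / d u v"
      unfolding S_def by blast
    have hB: "- Bd \<le> laplacian V P g u - laplacian V P g v"
      using lap_bound[OF g uv(1)] lap_bound[OF g uv(2)] unfolding Bd_def by linarith
    have "- Bd / d u v \<le> s" unfolding s using divide_right_mono[OF hB less_imp_le[OF duv]] by simp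
    then show "- Bd / d u v \<le> s" .
  qed
  have mem: "(laplacian V P f u - laplacian V P f v) / d u v \<in> S" unfolding S_def using f t by blast
  have "ollivier_curv V P d u v = Inf S" unfolding ollivier_curv_def S_def by simp
  also have "\<dots> \<le> (laplacian V P f u - laplacian V P f v) / d u v" by (rule cInf_lower[OF mem bdd])
  finally have "0 \<le> (laplacian V P f u - laplacian V P f v) / d u v" using c0 by linarith
  then show ?thesis using duv by (simp add: zero_le_divide_iff)
qed

lemma curv_adj:
  assumes f: "Lip1 V d f" and uv: "u\<in>V" "v\<in>V" "adj P u v" and t: "f v - f u = min (d u v) (d v u)"
  shows "laplacian V P f v \<le> laplacian V P f u"
proof (cases "d u v \<le> d v u")
  case True
  then show ?thesis using curv_adj0[OF f uv] t by simp
next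
  case False
  have "laplacian V P (\<lambda>x. - f x) u \<le> laplacian V P (\<lambda>x. - f x) v"
    by (rule curv_adj0[OF Lip1_neg[OF f] uv(2,1) adj_sym[OF uv]]) (use t False in simp)
  then show ?thesis by (simp add: lap_neg)
qed

lemma geo_step:
  assumes uv: "u\<in>V" "v\<in>V" "u \<noteq> v"
  shows "\<exists>b\<in>V. adj P u b \<and> rho u v = min (d u b) (d b u) + rho b v"
proof (rule ccontr)
  assume neg: "\<not> ?thesis"
  define N where "N = {b\<in>V. adj P u b}"
  define sl where "sl b = min (d u b) (d b u) - (rho u v - rho b v)" for b
  have slpos: "sl b > 0" if "b \<in> N" for b
  proof -
    have b: "b\<in>V" "adj P u b" using that N_def by auto
    have "rho u v \<le> rho u b + rho b v" by (rule rho_tri[OF uv(1) b(1) uv(2)])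
    moreover have "rho u b \<le> min (d u b) (d b u)" using rho_le_d1[OF uv(1) b(1)] rho_le_d2[OF uv(1) b(1)] by simp
    ultimately have "rho u v \<le> min (d u b) (d b u) + rho b v" by linarith
    moreover have "rho u v \<noteq> min (d u b) (d b u) + rho b v" using neg b by blast
    ultimately have "rho u v < min (d u b) (d b u) + rho b v" by linarith
    then show ?thesis unfolding sl_def by linarith
  qed
  have finN: "finite N" using finV N_def by auto
  define t where "t = (if N = {} then 1 else Min (sl ` N))"
  have tpos: "t > 0" unfolding t_def using finN slpos by auto
  have tle: "t \<le> sl b" if "b\<in>N" for b unfolding t_def using that finN by auto
  define h where "h w = - rho w v - (if w = u then t else 0)" for w
  have "Lip1 V d h"
  proof (rule loc_glob, intro ballI impI)
    fix a b assume ab: "a\<in>V" "b\<in>V" "adj P a b"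
    have anb: "a \<noteq> b" using ab(3) by (simp add: adj_def)
    show "\<bar>h b - h a\<bar> \<le> d a b"
    proof (cases "a = u")
      case True
      then have bN: "b \<in> N" using ab N_def by auto
      have bu: "b \<noteq> u" using anb True by simp
      have e: "h b - h u = rho u v - rho b v + t" unfolding h_def using True bu by simp
      have "rho u v - rho b v + t \<le> min (d u b) (d b u)" using tle[OF bN] unfolding sl_def by linarith
      then have "rho u v - rho b v + t \<le> d u b" by linarith
      moreover have "rho b v - rho u v \<le> rho b u" using rho_tri[OF ab(2) uv(1) uv(2)] by simp
      moreover have "rho b u \<le> d u b" using rho_le_d2[OF ab(2) uv(1)] .
      ultimately have "\<bar>h b - h u\<bar> \<le> d u b" using e tpos by (intro abs_leI) linarith+
      then show ?thesis unfolding True .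
    next
      case False
      note au = False
      show ?thesis
      proof (cases "b = u")
        case True
        have "adj P b a" using adj_sym[OF ab(1) ab(2) ab(3)] .
        then have aN: "a \<in> N" using ab(1) True N_def by simp
        have e: "h u - h a = rho a v - rho u v - t" unfolding h_def using True au by simp
        have "rho u v - rho a v + t \<le> min (d u a) (d a u)" using tle[OF aN] unfolding sl_def by linarith
        then have "rho u v - rho a v + t \<le> d a u" by linarith
        moreover have "rho a v - rho u v \<le> rho a u" using rho_tri[OF ab(1) uv(1) uv(2)] by simp
        moreover have "rho a u \<le> d a u" using rho_le_d1[OF ab(1) uv(1)] .
        ultimately have "\<bar>h u - h a\<bar> \<le> d a u" using e tpos by (intro abs_leI) linarith+
        then show ?thesis unfolding True .
      next
        case False
        have e: "h b - h a = rho a v - rho b v" unfolding h_def using False au by simp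
        have "rho a v - rho b v \<le> rho a b" using rho_tri[OF ab(1) ab(2) uv(2)] by simp
        moreover have "rho b v - rho a v \<le> rho a b"
          using rho_tri[OF ab(2) ab(1) uv(2)] rho_sym[OF ab(1,2)] by linarith
        moreover have "rho a b \<le> d a b" using rho_le_d1[OF ab(1,2)] .
        ultimately have f123: "rho a v - rho b v \<le> rho a b" "rho b v - rho a v \<le> rho a b" "rho a b \<le> d a b" by auto
        have i1: "h b - h a \<le> d a b" using f123(1,3) e by linarith
        have i2: "h a - h b \<le> d a b" using f123(2,3) e by linarith
        show ?thesis by (rule abs_leI) (use i1 i2 in linarith)+
      qed
    qed
  qed
  then have "h v - h u \<le> rho u v" by (rule rho_upper[OF _ uv(1) uv(2)])
  moreover have "h v = 0" unfolding h_def using uv(3) rho_refl[OF uv(2)] by simp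
  moreover have "h u = - rho u v - t" unfolding h_def by simp
  ultimately show False using tpos by linarith
qed

lemma rank_induct:
  fixes r :: "'a \<Rightarrow> real"
  assumes step: "\<And>u. u\<in>V \<Longrightarrow> (\<And>b. b\<in>V \<Longrightarrow> r b < r u \<Longrightarrow> Q b) \<Longrightarrow> Q u"
    and uV: "u\<in>V"
  shows "Q u"
  using uV
proof (induction "card {w\<in>V. r w < r u}" arbitrary: u rule: less_induct)
  case less
  show ?case
  proof (rule step[OF less.prems])
    fix b assume b: "b\<in>V" "r b < r u"
    have "{w\<in>V. r w < r b} \<subset> {w\<in>V. r w < r u}" using b by auto
    then have "card {w\<in>V. r w < r b} < card {w\<in>V. r w < r u}"
      by (rule psubset_card_mono[rotated]) (use finV in auto)
    then show "Q b" using less.hyps b by blast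
  qed
qed

lemma curv_tight:
  assumes f: "Lip1 V d f" and uv: "u\<in>V" "v\<in>V" and t: "f v - f u = rho u v"
  shows "laplacian V P f v \<le> laplacian V P f u"
proof -
  have "f v - f u = rho u v \<longrightarrow> laplacian V P f v \<le> laplacian V P f u"
  proof (rule rank_induct[where r = "\<lambda>w. rho w v" and Q = "\<lambda>u. f v - f u = rho u v \<longrightarrow> laplacian V P f v \<le> laplacian V P f u", OF _ uv(1)])
    fix u assume uV: "u \<in> V" and IH: "\<And>b. b\<in>V \<Longrightarrow> rho b v < rho u v \<Longrightarrow> f v - f b = rho b v \<longrightarrow> laplacian V P f v \<le> laplacian V P f b"
    show "f v - f u = rho u v \<longrightarrow> laplacian V P f v \<le> laplacian V P f u"
    proof
      assume tu: "f v - f u = rho u v"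
      show "laplacian V P f v \<le> laplacian V P f u"
      proof (cases "u = v")
        case True then show ?thesis by simp
      next
        case False
        then obtain b where b: "b\<in>V" "adj P u b" "rho u v = min (d u b) (d b u) + rho b v"
          using geo_step[OF uV uv(2)] by blast
        have ub: "u \<noteq> b" using b(2) by (simp add: adj_def)
        have dsp: "min (d u b) (d b u) > 0" using dpos[OF uV b(1) ub] dpos[OF b(1) uV] ub by simp
        have l1: "f b - f u \<le> min (d u b) (d b u)" using Lip1_D1[OF f uV b(1)] Lip1_D2[OF f uV b(1)] by simp
        have l2: "f v - f b \<le> rho b v" using rho_upper[OF f b(1) uv(2)] .
        have e1: "f b - f u = min (d u b) (d b u)" using l1 l2 tu b(3) by linarith
        have e2: "f v - f b = rho b v" using l1 l2 tu b(3) by linarith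
        have "laplacian V P f b \<le> laplacian V P f u" by (rule curv_adj[OF f uV b(1,2) e1])
        moreover have "rho b v < rho u v" using b(3) dsp by linarith
        then have "laplacian V P f v \<le> laplacian V P f b" using IH[OF b(1)] e2 by blast
        ultimately show ?thesis by linarith
      qed
    qed
  qed
  then show ?thesis using uv t by blast
qed

lemma sep_geo:
  assumes x: "x \<in> X" and y: "y \<in> Y"
  shows "\<exists>k\<in>K. rho x k + rho k y \<le> rho x y"
proof -
  have yV: "y \<in> V" using y YV by auto
  have xV: "x \<in> V" using x XV by auto
  have "x \<in> X \<longrightarrow> (\<exists>k\<in>K. rho x k + rho k y \<le> rho x y)"
  proof (rule rank_induct[where r = "\<lambda>w. rho w y" and Q = "\<lambda>x. x \<in> X \<longrightarrow> (\<exists>k\<in>K. rho x k + rho k y \<le> rho x y)", OF _ xV])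
    fix u assume uV: "u \<in> V" and IH: "\<And>b. b\<in>V \<Longrightarrow> rho b y < rho u y \<Longrightarrow> b \<in> X \<longrightarrow> (\<exists>k\<in>K. rho b k + rho k y \<le> rho b y)"
    show "u \<in> X \<longrightarrow> (\<exists>k\<in>K. rho u k + rho k y \<le> rho u y)"
    proof
      assume uX: "u \<in> X"
      have uy: "u \<noteq> y" using uX y XY by auto
      then obtain b where b: "b\<in>V" "adj P u b" "rho u y = min (d u b) (d b u) + rho b y"
        using geo_step[OF uV yV] by blast
      have ub: "u \<noteq> b" using b(2) by (simp add: adj_def)
      have dsp: "min (d u b) (d b u) > 0" using dpos[OF uV b(1) ub] dpos[OF b(1) uV] ub by simp
      have rub: "rho u b \<le> min (d u b) (d b u)" using rho_le_d1[OF uV b(1)] rho_le_d2[OF uV b(1)] by simp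
      have bY: "b \<notin> Y" using nosep uX b(2) by blast
      show "\<exists>k\<in>K. rho u k + rho k y \<le> rho u y"
      proof (cases "b \<in> K")
        case True
        then show ?thesis using rub b(3) by (intro bexI[of _ b]) auto
      next
        case False
        then have bX: "b \<in> X" using b(1) bY VXKY by auto
        have "rho b y < rho u y" using b(3) dsp by linarith
        then obtain k where k: "k\<in>K" "rho b k + rho k y \<le> rho b y"
          using IH[OF b(1)] bX by blast
        have kV: "k \<in> V" using k(1) KV by auto
        have "rho u k \<le> rho u b + rho b k" using rho_tri[OF uV b(1) kV] .
        then show ?thesis using k rub b(3) by (intro bexI[of _ k]) auto
      qed
    qed
  qed
  then show ?thesis using x by blast
qed

end

context thm_setup
begin

definition Flow where "Flow \<phi> v = Max ((\<lambda>k. \<phi> k - rho k v) ` K)"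
definition Fup where "Fup \<phi> v = Min ((\<lambda>k. \<phi> k + rho k v) ` K)"
definition Fx where "Fx \<phi> v = (if v \<in> K then \<phi> v else if v \<in> X then Flow \<phi> v else Fup \<phi> v)"
definition LipK where "LipK \<phi> \<longleftrightarrow> (\<forall>k1\<in>K. \<forall>k2\<in>K. \<phi> k2 - \<phi> k1 \<le> rho k1 k2)"

lemma finKimg: "finite ((f::'a \<Rightarrow> real) ` K)" "(f::'a \<Rightarrow> real) ` K \<noteq> {}" using finK Kne by auto

lemma Flow_ge: "k \<in> K \<Longrightarrow> \<phi> k - rho k v \<le> Flow \<phi> v"
  unfolding Flow_def by (rule Max_ge[OF finKimg(1)]) simp
lemma Flow_attain: "\<exists>k\<in>K. Flow \<phi> v = \<phi> k - rho k v"
proof -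
  have "Flow \<phi> v \<in> (\<lambda>k. \<phi> k - rho k v) ` K" unfolding Flow_def by (rule Max_in[OF finKimg])
  then show ?thesis by auto
qed
lemma Fup_le: "k \<in> K \<Longrightarrow> Fup \<phi> v \<le> \<phi> k + rho k v"
  unfolding Fup_def by (rule Min_le[OF finKimg(1)]) simp
lemma Fup_attain: "\<exists>k\<in>K. Fup \<phi> v = \<phi> k + rho k v"
proof -
  have "Fup \<phi> v \<in> (\<lambda>k. \<phi> k + rho k v) ` K" unfolding Fup_def by (rule Min_in[OF finKimg])
  then show ?thesis by auto
qed

lemma kV: "k \<in> K \<Longrightarrow> k \<in> V" using KV by auto

lemma Flow_K: assumes L: "LipK \<phi>" and k: "k \<in> K" shows "Flow \<phi> k = \<phi> k"
proof -
  obtain k' where k': "k'\<in>K" "Flow \<phi> k = \<phi> k' - rho k' k" using Flow_attain by blast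
  have "\<phi> k' - \<phi> k \<le> rho k k'" using L k k'(1) unfolding LipK_def by blast
  then have "Flow \<phi> k \<le> \<phi> k" using k' rho_sym[OF kV[OF k] kV[OF k'(1)]] by linarith
  moreover have "\<phi> k - rho k k \<le> Flow \<phi> k" by (rule Flow_ge[OF k])
  ultimately show ?thesis using rho_refl[OF kV[OF k]] by linarith
qed

lemma Fup_K: assumes L: "LipK \<phi>" and k: "k \<in> K" shows "Fup \<phi> k = \<phi> k"
proof -
  obtain k' where k': "k'\<in>K" "Fup \<phi> k = \<phi> k' + rho k' k" using Fup_attain by blast
  have "\<phi> k - \<phi> k' \<le> rho k' k" using L k k'(1) unfolding LipK_def by blast
  then have "\<phi> k \<le> Fup \<phi> k" using k' by linarith
  moreover have "Fup \<phi> k \<le> \<phi> k + rho k k" by (rule Fup_le[OF k])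
  ultimately show ?thesis using rho_refl[OF kV[OF k]] by linarith
qed

lemma Flow_lip: assumes "u\<in>V" "v\<in>V" shows "Flow \<phi> v - Flow \<phi> u \<le> rho u v"
proof -
  obtain k where k: "k\<in>K" "Flow \<phi> v = \<phi> k - rho k v" using Flow_attain by blast
  have "\<phi> k - rho k u \<le> Flow \<phi> u" by (rule Flow_ge[OF k(1)])
  moreover have "rho k u \<le> rho k v + rho v u" by (rule rho_tri[OF kV[OF k(1)] assms(2) assms(1)])
  ultimately show ?thesis using k rho_sym[OF assms] by linarith
qed

lemma Fup_lip: assumes "u\<in>V" "v\<in>V" shows "Fup \<phi> v - Fup \<phi> u \<le> rho u v"
proof -
  obtain k where k: "k\<in>K" "Fup \<phi> u = \<phi> k + rho k u" using Fup_attain by blast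
  have "Fup \<phi> v \<le> \<phi> k + rho k v" by (rule Fup_le[OF k(1)])
  moreover have "rho k v \<le> rho k u + rho u v" by (rule rho_tri[OF kV[OF k(1)] assms(1) assms(2)])
  ultimately show ?thesis using k by linarith
qed

lemma Fx_nY: "LipK \<phi> \<Longrightarrow> v \<notin> Y \<Longrightarrow> v \<in> V \<Longrightarrow> Fx \<phi> v = Flow \<phi> v"
  unfolding Fx_def using Flow_K VXKY by auto
lemma Fx_Y: "v \<in> Y \<Longrightarrow> Fx \<phi> v = Fup \<phi> v"
  unfolding Fx_def using XY KY by auto
lemma Fx_K: "v \<in> K \<Longrightarrow> Fx \<phi> v = \<phi> v" unfolding Fx_def by simp

lemma Fx_LipR: assumes L: "LipK \<phi>" shows "LipR (Fx \<phi>)"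
  unfolding LipR_def
proof (intro ballI)
  fix u v assume uv: "u\<in>V" "v\<in>V"
  show "Fx \<phi> v - Fx \<phi> u \<le> rho u v"
  proof (cases "u \<in> Y")
    case uY: True
    show ?thesis
    proof (cases "v \<in> Y")
      case True
      then show ?thesis using Fup_lip[OF uv] Fx_Y uY by simp
    next
      case False
      obtain k1 where k1: "k1\<in>K" "Flow \<phi> v = \<phi> k1 - rho k1 v" using Flow_attain by blast
      obtain k2 where k2: "k2\<in>K" "Fup \<phi> u = \<phi> k2 + rho k2 u" using Fup_attain by blast
      have "\<phi> k1 - \<phi> k2 \<le> rho k2 k1" using L k1(1) k2(1) unfolding LipK_def by blast
      moreover have "rho k2 k1 \<le> rho k2 u + rho u k1" by (rule rho_tri[OF kV[OF k2(1)] uv(1) kV[OF k1(1)]])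
      moreover have "rho u k1 \<le> rho u v + rho v k1" by (rule rho_tri[OF uv kV[OF k1(1)]])
      moreover have "rho v k1 = rho k1 v" by (rule rho_sym[OF uv(2) kV[OF k1(1)]])
      ultimately have "Flow \<phi> v - Fup \<phi> u \<le> rho u v" using k1 k2 by linarith
      then show ?thesis using Fx_Y[OF uY] Fx_nY[OF L False uv(2)] by simp
    qed
  next
    case unY: False
    show ?thesis
    proof (cases "v \<in> Y")
      case vY: True
      show ?thesis
      proof (cases "u \<in> K")
        case True
        then have "Fx \<phi> u = Fup \<phi> u" using Fup_K[OF L True] Fx_K by simp
        then show ?thesis using Fup_lip[OF uv] Fx_Y[OF vY] by simp
      next
        case False
        then have uX: "u \<in> X" using uv(1) unY VXKY by auto
        obtain k where k: "k\<in>K" "rho u k + rho k v \<le> rho u v" using sep_geo[OF uX vY] by blast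
        have "Fup \<phi> v \<le> \<phi> k + rho k v" by (rule Fup_le[OF k(1)])
        moreover have "\<phi> k - rho k u \<le> Flow \<phi> u" by (rule Flow_ge[OF k(1)])
        moreover have "rho k u = rho u k" by (rule rho_sym[OF kV[OF k(1)] uv(1)])
        ultimately have "Fup \<phi> v - Flow \<phi> u \<le> rho u v" using k by linarith
        then show ?thesis using Fx_Y[OF vY] Fx_nY[OF L unY uv(1)] by simp
      qed
    next
      case False
      then show ?thesis using Flow_lip[OF uv] Fx_nY[OF L unY uv(1)] Fx_nY[OF L False uv(2)] by simp
    qed
  qed
qed

lemma Fx_Lip1: "LipK \<phi> \<Longrightarrow> Lip1 V d (Fx \<phi>)" using Fx_LipR LipR_Lip1 by blast

lemma Flow_mono: "(\<And>k. k\<in>K \<Longrightarrow> \<phi> k \<le> \<psi> k) \<Longrightarrow> Flow \<phi> v \<le> Flow \<psi> v"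
proof -
  assume le: "\<And>k. k\<in>K \<Longrightarrow> \<phi> k \<le> \<psi> k"
  obtain k where k: "k\<in>K" "Flow \<phi> v = \<phi> k - rho k v" using Flow_attain by blast
  have "\<psi> k - rho k v \<le> Flow \<psi> v" by (rule Flow_ge[OF k(1)])
  then show ?thesis using k le[OF k(1)] by linarith
qed
lemma Fup_mono: "(\<And>k. k\<in>K \<Longrightarrow> \<phi> k \<le> \<psi> k) \<Longrightarrow> Fup \<phi> v \<le> Fup \<psi> v"
proof -
  assume le: "\<And>k. k\<in>K \<Longrightarrow> \<phi> k \<le> \<psi> k"
  obtain k where k: "k\<in>K" "Fup \<psi> v = \<psi> k + rho k v" using Fup_attain by blast
  have "Fup \<phi> v \<le> \<phi> k + rho k v" by (rule Fup_le[OF k(1)])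
  then show ?thesis using k le[OF k(1)] by linarith
qed
lemma Fx_mono: "(\<And>k. k\<in>K \<Longrightarrow> \<phi> k \<le> \<psi> k) \<Longrightarrow> Fx \<phi> v \<le> Fx \<psi> v"
  unfolding Fx_def using Flow_mono Fup_mono by auto

lemma Flow_shift: "Flow (\<lambda>v. \<phi> v + c) w = Flow \<phi> w + c"
proof -
  have "Flow (\<lambda>v. \<phi> v + c) w = Max ((\<lambda>k. (\<phi> k - rho k w) + c) ` K)"
    unfolding Flow_def by (simp add: algebra_simps)
  also have "\<dots> = Flow \<phi> w + c" unfolding Flow_def by (rule Max_add_commute[OF finK Kne])
  finally show ?thesis .
qed
lemma Fup_shift: "Fup (\<lambda>v. \<phi> v + c) w = Fup \<phi> w + c"
proof -
  have "Fup (\<lambda>v. \<phi> v + c) w = Min ((\<lambda>k. (\<phi> k + rho k w) + c) ` K)"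
    unfolding Fup_def by (simp add: algebra_simps)
  also have "\<dots> = Fup \<phi> w + c" unfolding Fup_def by (rule Min_add_commute[OF finK Kne])
  finally show ?thesis .
qed
lemma Fx_shift: "Fx (\<lambda>v. \<phi> v + c) = (\<lambda>v. Fx \<phi> v + c)"
  unfolding Fx_def by (rule ext) (simp add: Flow_shift Fup_shift)

lemma lap_shift: "laplacian V P (\<lambda>v. f v + c) w = laplacian V P f w"
  unfolding laplacian_def by simp

lemma LipK_Fup: "LipK (Fup u)"
  unfolding LipK_def using Fup_lip kV by blast

lemma LipK_shift: "LipK \<phi> \<Longrightarrow> LipK (\<lambda>v. \<phi> v + c)" unfolding LipK_def by simp

end

context thm_setup
begin

definition Stot where "Stot = (\<Sum>k\<in>K. \<Sum>y\<in>V. P k y)"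
definition eps where "eps = 1 / (1 + Stot)"
definition G where "G \<phi> v = \<phi> v + eps * laplacian V P (Fx \<phi>) v"
definition T where "T \<phi> = Fup (G \<phi>)"

lemma rowsum_nn: "k \<in> V \<Longrightarrow> 0 \<le> (\<Sum>y\<in>V. P k y)" using Pnn by (simp add: sum_nonneg)
lemma Stot_nn: "0 \<le> Stot" unfolding Stot_def using rowsum_nn kV by (simp add: sum_nonneg)
lemma eps_pos: "0 < eps" unfolding eps_def using Stot_nn by simp
lemma rowsum_le: "k \<in> K \<Longrightarrow> (\<Sum>y\<in>V. P k y) \<le> Stot"
  unfolding Stot_def by (rule member_le_sum) (use rowsum_nn kV finK in auto)
lemma epsS: assumes "k \<in> K" shows "eps * (\<Sum>y\<in>V. P k y) \<le> 1"
proof -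
  have "eps * (\<Sum>y\<in>V. P k y) \<le> eps * Stot" using rowsum_le[OF assms] eps_pos by simp
  also have "\<dots> \<le> 1" unfolding eps_def using Stot_nn by simp
  finally show ?thesis .
qed

lemma lap_expand: "laplacian V P f w = (\<Sum>y\<in>V. P w y * f y) - (\<Sum>y\<in>V. P w y) * f w"
  unfolding laplacian_def by (simp add: right_diff_distrib sum_subtractf sum_distrib_right)

lemma G_mono:
  assumes le: "\<And>k. k\<in>K \<Longrightarrow> \<phi> k \<le> \<psi> k" and k: "k \<in> K"
  shows "G \<phi> k \<le> G \<psi> k"
proof -
  define S where "S = (\<Sum>y\<in>V. P k y)"
  have e: "G \<psi> k - G \<phi> k = (\<psi> k - \<phi> k) * (1 - eps * S) + eps * ((\<Sum>y\<in>V. P k y * Fx \<psi> y) - (\<Sum>y\<in>V. P k y * Fx \<phi> y))"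
    unfolding G_def lap_expand S_def using Fx_K[OF k] by (simp add: algebra_simps)
  have "0 \<le> (\<psi> k - \<phi> k) * (1 - eps * S)" using le[OF k] epsS[OF k] unfolding S_def by simp
  moreover have "(\<Sum>y\<in>V. P k y * Fx \<phi> y) \<le> (\<Sum>y\<in>V. P k y * Fx \<psi> y)"
  proof (rule sum_mono)
    fix y assume y: "y \<in> V"
    show "P k y * Fx \<phi> y \<le> P k y * Fx \<psi> y"
      using Pnn[OF kV[OF k] y] Fx_mono[of \<phi> \<psi> y] le by (simp add: mult_left_mono)
  qed
  then have "0 \<le> eps * ((\<Sum>y\<in>V. P k y * Fx \<psi> y) - (\<Sum>y\<in>V. P k y * Fx \<phi> y))" using eps_pos by simp
  ultimately show ?thesis using e by linarith
qed

lemma T_mono: "(\<And>k. k\<in>K \<Longrightarrow> \<phi> k \<le> \<psi> k) \<Longrightarrow> T \<phi> v \<le> T \<psi> v"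
  unfolding T_def by (rule Fup_mono) (rule G_mono)

lemma G_shift: "G (\<lambda>v. \<phi> v + c) = (\<lambda>v. G \<phi> v + c)"
  unfolding G_def Fx_shift by (rule ext) (simp add: lap_shift)

lemma T_shift: "T (\<lambda>v. \<phi> v + c) = (\<lambda>v. T \<phi> v + c)"
  unfolding T_def G_shift by (rule ext) (rule Fup_shift)

lemma T_LipK: "LipK (T \<phi>)" unfolding T_def by (rule LipK_Fup)

lemma Tn_shift: "(T ^^ n) (\<lambda>v. \<phi> v + c) = (\<lambda>v. (T ^^ n) \<phi> v + c)"
  by (induction n) (simp_all add: T_shift)

lemma Tn_mono: "(\<And>k. k\<in>K \<Longrightarrow> \<phi> k \<le> \<psi> k) \<Longrightarrow> \<forall>k\<in>K. (T ^^ n) \<phi> k \<le> (T ^^ n) \<psi> k"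
proof (induction n)
  case 0 then show ?case by simp
next
  case (Suc n)
  then show ?case by (simp add: T_mono)
qed

lemma sub_iter: assumes "\<forall>k\<in>K. T x k \<le> x k + l" shows "\<forall>k\<in>K. T (T x) k \<le> T x k + l"
proof
  fix k assume k: "k \<in> K"
  have "T (T x) k \<le> T (\<lambda>v. x v + l) k" by (rule T_mono) (use assms in auto)
  then show "T (T x) k \<le> T x k + l" by (simp add: T_shift)
qed

definition Bd where "Bd = (\<Sum>k\<in>K. \<Sum>y\<in>V. P k y * d k y)"

lemma rowd_nn: "k \<in> V \<Longrightarrow> 0 \<le> (\<Sum>y\<in>V. P k y * d k y)"
  using Pnn dnn by (simp add: sum_nonneg)
lemma rowd_le: "k \<in> K \<Longrightarrow> (\<Sum>y\<in>V. P k y * d k y) \<le> Bd"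
  unfolding Bd_def by (rule member_le_sum) (use rowd_nn kV finK in auto)

lemma G_lower: assumes L: "LipK \<phi>" and k: "k \<in> K" shows "\<phi> k - eps * Bd \<le> G \<phi> k"
proof -
  have "\<bar>laplacian V P (Fx \<phi>) k\<bar> \<le> Bd"
    using lap_bound[OF Fx_Lip1[OF L] kV[OF k]] rowd_le[OF k] by linarith
  then have "- Bd \<le> laplacian V P (Fx \<phi>) k" by linarith
  then have "eps * (- Bd) \<le> eps * laplacian V P (Fx \<phi>) k" by (rule mult_left_mono) (use eps_pos in simp)
  then show ?thesis unfolding G_def by simp
qed

definition Lam where "Lam = {l. \<exists>x. \<forall>k\<in>K. T x k \<le> x k + l}"

lemma argmin_K: obtains km where "km \<in> K" "\<And>k. k \<in> K \<Longrightarrow> (y::'a\<Rightarrow>real) km \<le> y k"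
proof -
  have "Min (y ` K) \<in> y ` K" by (rule Min_in[OF finKimg])
  then obtain km where km: "km \<in> K" "y km = Min (y ` K)" by auto
  have "y km \<le> y k" if "k \<in> K" for k using km(2) Min_le[OF finKimg(1)] that by simp
  then show ?thesis using that km(1) by blast
qed

lemma Lam_lb: assumes "l \<in> Lam" shows "- (eps * Bd) \<le> l"
proof -
  obtain x where x: "\<forall>k\<in>K. T x k \<le> x k + l" using assms unfolding Lam_def by blast
  define y where "y = T x"
  have yL: "LipK y" unfolding y_def by (rule T_LipK)
  have yT: "\<forall>k\<in>K. T y k \<le> y k + l" unfolding y_def by (rule sub_iter[OF x])
  obtain km where km: "km \<in> K" "\<And>k. k \<in> K \<Longrightarrow> y km \<le> y k" using argmin_K by blast
  obtain k1 where k1: "k1 \<in> K" "T y km = G y k1 + rho k1 km" unfolding T_def using Fup_attain by blast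
  have "y k1 - eps * Bd \<le> G y k1" by (rule G_lower[OF yL k1(1)])
  moreover have "0 \<le> rho k1 km" by (rule rho_nn[OF kV[OF k1(1)] kV[OF km(1)]])
  moreover have "y km \<le> y k1" using km(2)[OF k1(1)] .
  moreover have "T y km \<le> y km + l" using yT km(1) by blast
  ultimately show ?thesis using k1(2) by linarith
qed

lemma Lam_ne: "Lam \<noteq> {}"
proof -
  have "\<forall>k\<in>K. T (\<lambda>_. 0) k \<le> (\<lambda>_. 0) k + Max ((\<lambda>k. T (\<lambda>_. 0) k) ` K)"
    using Max_ge[OF finKimg(1)] by simp
  then show ?thesis unfolding Lam_def by blast
qed

lemma Lam_bdd: "bdd_below Lam" unfolding bdd_below_def using Lam_lb by blast

lemma Lam_up: assumes "l \<in> Lam" "l \<le> m" shows "m \<in> Lam"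
proof -
  obtain x where x: "\<forall>k\<in>K. T x k \<le> x k + l" using assms(1) unfolding Lam_def by blast
  have "\<forall>k\<in>K. T x k \<le> x k + m"
  proof
    fix k assume "k \<in> K"
    then have "T x k \<le> x k + l" using x by blast
    then show "T x k \<le> x k + m" using assms(2) by linarith
  qed
  then show ?thesis unfolding Lam_def by blast
qed

definition lstar where "lstar = Inf Lam"

lemma lstar_le: "l \<in> Lam \<Longrightarrow> lstar \<le> l" unfolding lstar_def by (rule cInf_lower[OF _ Lam_bdd])

end

context thm_setup
begin

lemma lstar_in: "lstar \<in> Lam"
proof -
  define lam where "lam n = lstar + 1 / real (Suc n)" for n
  have ex: "\<forall>n. \<exists>x. \<forall>k\<in>K. T x k \<le> x k + lam n"
  proof
    fix n
    have "lstar < lam n" unfolding lam_def by simp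
    then obtain l where l: "l \<in> Lam" "l < lam n" using cInf_lessD[OF Lam_ne] unfolding lstar_def by blast
    have "lam n \<in> Lam" by (rule Lam_up[OF l(1)]) (use l in simp)
    then show "\<exists>x. \<forall>k\<in>K. T x k \<le> x k + lam n" unfolding Lam_def by blast
  qed
  then obtain xs where xs: "\<And>n. \<forall>k\<in>K. T (xs n) k \<le> xs n k + lam n" by metis
  obtain k0 where k0: "k0 \<in> K" using Kne by blast
  define ys where "ys n = (\<lambda>v. T (xs n) v + (- T (xs n) k0))" for n
  have ysL: "LipK (ys n)" for n unfolding ys_def by (rule LipK_shift[OF T_LipK])
  have ys0: "ys n k0 = 0" for n unfolding ys_def by simp
  have ysT: "\<forall>k\<in>K. T (ys n) k \<le> ys n k + lam n" for n
    unfolding ys_def T_shift using sub_iter[OF xs[of n]] by simp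
  have lam_mono: "lam j \<le> lam n" if "n \<le> j" for n j
    unfolding lam_def using that by (simp add: frac_le)
  have ysb: "- rho k0 k \<le> ys n k \<and> ys n k \<le> rho k0 k" if k: "k \<in> K" for n k
  proof -
    have "ys n k - ys n k0 \<le> rho k0 k" "ys n k0 - ys n k \<le> rho k k0"
      using ysL[of n] k k0 unfolding LipK_def by blast+
    moreover have "rho k k0 = rho k0 k" by (rule rho_sym[OF kV[OF k] kV[OF k0]])
    ultimately show ?thesis using ys0[of n] by linarith
  qed
  define w where "w n k = (INF j\<in>{n..}. ys j k)" for n k
  have wbdd: "bdd_below ((\<lambda>j. ys j k) ` A)" if "k \<in> K" for k A
    unfolding bdd_below_def using ysb[OF that] by blast
  have w_le: "w n k \<le> ys j k" if "k \<in> K" "n \<le> j" for n j k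
    unfolding w_def by (rule cINF_lower[OF wbdd[OF that(1)]]) (use that in simp)
  have w_mono: "w n k \<le> w m k" if "k \<in> K" "n \<le> m" for n m k
    unfolding w_def by (rule cINF_superset_mono) (use that wbdd[OF that(1)] in auto)
  have w_ub: "w n k \<le> rho k0 k" if "k \<in> K" for n k
    using w_le[OF that order_refl, of n] ysb[OF that, of n] by linarith
  have wT: "T (w n) k \<le> w n k + lam n" if k: "k \<in> K" for n k
  proof -
    have "T (w n) k - lam n \<le> (INF j\<in>{n..}. ys j k)"
    proof (rule cINF_greatest)
      show "{n..} \<noteq> {}" by auto
    next
      fix j assume j: "j \<in> {n..}"
      have "T (w n) k \<le> T (ys j) k" by (rule T_mono) (use w_le j in auto)
      also have "\<dots> \<le> ys j k + lam j" using ysT[of j] k by blast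
      also have "\<dots> \<le> ys j k + lam n" using lam_mono[of n j] j by simp
      finally show "T (w n) k - lam n \<le> ys j k" by simp
    qed
    then show ?thesis unfolding w_def by simp
  qed
  define W where "W k = (SUP n. w n k)" for k
  have Wbdd: "bdd_above (range (\<lambda>n. w n k))" if "k \<in> K" for k
    unfolding bdd_above_def using w_ub[OF that] by blast
  have W_ge: "w n k \<le> W k" if "k \<in> K" for n k
    unfolding W_def by (rule cSUP_upper[OF _ Wbdd[OF that]]) simp
  have W_ev: "eventually (\<lambda>n. W k - e < w n k) sequentially" if kk: "k \<in> K" and ee: "0 < e" for k e
  proof -
    have "W k - e < W k" using ee by simp
    then obtain N where N: "W k - e < w N k" unfolding W_def using less_cSUP_iff[OF _ Wbdd[OF kk]] by auto
    show ?thesis unfolding eventually_sequentially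
      using N w_mono[OF kk] by (meson less_le_trans)
  qed
  have "\<forall>k\<in>K. T W k \<le> W k + lstar"
  proof
    fix k assume k: "k \<in> K"
    show "T W k \<le> W k + lstar"
    proof (rule field_le_epsilon)
      fix e :: real assume e: "0 < e"
      have e2: "0 < e / 2" using e by simp
      have ev1: "eventually (\<lambda>n. \<forall>k'\<in>K. W k' - e/2 < w n k') sequentially"
        by (rule eventually_ball_finite[OF finK]) (use W_ev e2 in blast)
      obtain N0 where N0: "inverse (real (Suc N0)) < e/2" using reals_Archimedean[OF e2] by blast
      have ev2: "eventually (\<lambda>n. lam n \<le> lstar + e/2) sequentially"
        unfolding eventually_sequentially
      proof (intro exI allI impI)
        fix n assume "N0 \<le> n"
        then have "lam n \<le> lam N0" by (rule lam_mono)
        then show "lam n \<le> lstar + e/2" using N0 unfolding lam_def by (simp add: inverse_eq_divide)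
      qed
      obtain n where n1: "\<forall>k'\<in>K. W k' - e/2 < w n k'" and n2: "lam n \<le> lstar + e/2"
        using eventually_happens'[OF _ eventually_conj[OF ev1 ev2]] by auto
      have "T W k \<le> T (\<lambda>v. w n v + e/2) k" by (rule T_mono) (use n1 in force)
      also have "\<dots> = T (w n) k + e/2" by (simp add: T_shift)
      also have "\<dots> \<le> w n k + lam n + e/2" using wT[OF k, of n] by simp
      also have "\<dots> \<le> W k + lstar + e" using W_ge[OF k, of n] n2 by simp
      finally show "T W k \<le> W k + lstar + e" .
    qed
  qed
  then show ?thesis unfolding Lam_def by blast
qed

end

context thm_setup
begin

lemma eigen: "\<exists>z. LipK z \<and> (\<forall>k\<in>K. T z k = z k + lstar)"
proof -
  obtain x0 where x0: "\<forall>k\<in>K. T x0 k \<le> x0 k + lstar" using lstar_in unfolding Lam_def by blast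
  define x1 where "x1 = T x0"
  have x1L: "LipK x1" unfolding x1_def by (rule T_LipK)
  have x1T: "\<forall>k\<in>K. T x1 k \<le> x1 k + lstar" unfolding x1_def by (rule sub_iter[OF x0])
  define a where "a n = (\<lambda>v. (T ^^ n) x1 v + (- (real n * lstar)))" for n
  have TnL: "LipK ((T ^^ n) x1)" for n by (cases n) (simp_all add: x1L T_LipK)
  have aL: "LipK (a n)" for n unfolding a_def by (rule LipK_shift[OF TnL])
  have aT: "T (a n) = (\<lambda>v. a (Suc n) v + lstar)" for n
    unfolding a_def T_shift by (rule ext) (simp add: algebra_simps)
  have adec: "a (Suc n) k \<le> a n k" if k: "k\<in>K" for n k
  proof -
    have e: "(T ^^ Suc n) x1 = (T ^^ n) (T x1)" by (metis comp_apply funpow_Suc_right)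
    have "(T ^^ n) (T x1) k \<le> (T ^^ n) (\<lambda>v. x1 v + lstar) k"
      using Tn_mono[of "T x1" "\<lambda>v. x1 v + lstar" n] x1T k by auto
    then have "(T ^^ Suc n) x1 k \<le> (T ^^ n) x1 k + lstar" unfolding e Tn_shift by simp
    then show ?thesis unfolding a_def by (simp add: algebra_simps)
  qed
  have aanti: "a n k \<le> a m k" if k: "k\<in>K" and mn: "m \<le> n" for m n k
    using mn
  proof (induction n rule: dec_induct)
    case base then show ?case by simp
  next
    case (step n) then show ?case using adec[OF k, of n] by linarith
  qed
  define Dm where "Dm = Max ((\<lambda>p. rho (fst p) (snd p)) ` (K \<times> K))"
  have Dm: "rho k k' \<le> Dm" if "k\<in>K" "k'\<in>K" for k k'
  proof -
    have mem: "rho k k' \<in> (\<lambda>p. rho (fst p) (snd p)) ` (K \<times> K)"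
      by (rule image_eqI[where x="(k,k')"]) (use that in simp_all)
    have fin: "finite ((\<lambda>p. rho (fst p) (snd p)) ` (K \<times> K))" using finK by simp
    show ?thesis unfolding Dm_def by (rule Max_ge[OF fin mem])
  qed
  define m0 where "m0 = Min (x1 ` K)"
  have m0: "m0 \<le> x1 k" if "k\<in>K" for k unfolding m0_def by (rule Min_le) (use finK that in auto)
  have a0: "a 0 = x1" unfolding a_def by simp
  have alb: "m0 - 1 - Dm \<le> a n k" if k: "k\<in>K" for n k
  proof (rule ccontr)
    assume "\<not> ?thesis"
    then have lt: "a n k < m0 - 1 - Dm" by simp
    have below: "a n k' \<le> x1 k' - 1" if k': "k'\<in>K" for k'
    proof -
      have "a n k' - a n k \<le> rho k k'" using aL[of n] k k' unfolding LipK_def by blast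
      then show ?thesis using Dm[OF k k'] m0[OF k'] lt by linarith
    qed
    have Dm0: "0 \<le> Dm" using Dm[OF k k] rho_refl[OF kV[OF k]] by simp
    have n0: "n \<noteq> 0"
    proof
      assume "n = 0"
      then show False using lt a0 m0[OF k] Dm0 by simp
    qed
    define mu where "mu = lstar - 1 / real n"
    define w' where "w' v = Min ((\<lambda>j. (T ^^ j) x1 v - real j * mu) ` {..<n})" for v
    have fin: "finite ((\<lambda>j. (T ^^ j) x1 v - real j * mu) ` {..<n})" for v by simp
    have ne: "(\<lambda>j. (T ^^ j) x1 v - real j * mu) ` {..<n} \<noteq> {}" for v using n0 by (auto simp: lessThan_empty_iff)
    have step: "T w' k' \<le> (T ^^ Suc j) x1 k' - real j * mu" if "k'\<in>K" "j < n" for k' j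
    proof -
      have "T w' k' \<le> T (\<lambda>v. (T ^^ j) x1 v + (- (real j * mu))) k'"
      proof (rule T_mono)
        fix k'' assume "k'' \<in> K"
        show "w' k'' \<le> (T ^^ j) x1 k'' + - (real j * mu)"
          unfolding w'_def by (rule Min_le) (use that in auto)
      qed
      also have "\<dots> = (T ^^ Suc j) x1 k' - real j * mu" unfolding T_shift by simp
      finally show ?thesis .
    qed
    have "\<forall>k'\<in>K. T w' k' \<le> w' k' + mu"
    proof
      fix k' assume k': "k'\<in>K"
      have eq: "w' k' = Min ((\<lambda>j. (T ^^ j) x1 k' - real j * mu) ` {..<n})" by (simp add: w'_def)
      have "T w' k' - mu \<le> Min ((\<lambda>j. (T ^^ j) x1 k' - real j * mu) ` {..<n})"
      proof (subst Min_ge_iff[OF fin ne], intro ballI)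
        fix t assume "t \<in> (\<lambda>j. (T ^^ j) x1 k' - real j * mu) ` {..<n}"
        then obtain i where i: "i < n" "t = (T ^^ i) x1 k' - real i * mu" by auto
        show "T w' k' - mu \<le> t"
        proof (cases i)
          case 0
          have s: "T w' k' \<le> (T ^^ Suc (n - 1)) x1 k' - real (n - 1) * mu" by (rule step[OF k']) (use n0 in simp)
          have sn: "Suc (n - 1) = n" using n0 by simp
          have rn: "real (n - 1) = real n - 1" using n0 by (simp add: of_nat_diff)
          have "(T ^^ n) x1 k' = a n k' + real n * lstar" unfolding a_def by simp
          then have "(T ^^ n) x1 k' \<le> x1 k' - 1 + real n * lstar" using below[OF k'] by simp
          moreover have "real n * mu = real n * lstar - 1" unfolding mu_def using n0 by (simp add: right_diff_distrib)
          ultimately have "T w' k' \<le> x1 k' - 1 + real n * lstar - (real n - 1) * mu" using s sn rn by simp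
          also have "\<dots> = x1 k' - 1 + mu + (real n * lstar - real n * mu)" by (simp add: algebra_simps)
          also have "\<dots> = x1 k' + mu" using \<open>real n * mu = real n * lstar - 1\<close> by simp
          finally show ?thesis using i 0 by simp
        next
          case (Suc j)
          have "T w' k' \<le> (T ^^ Suc j) x1 k' - real j * mu" by (rule step[OF k']) (use i Suc in simp)
          then show ?thesis using i Suc by (simp add: algebra_simps)
        qed
      qed
      then show "T w' k' \<le> w' k' + mu" unfolding eq by linarith
    qed
    then have "mu \<in> Lam" unfolding Lam_def by blast
    then have "lstar \<le> mu" by (rule lstar_le)
    moreover have "0 < 1 / real n" using n0 by simp
    ultimately show False unfolding mu_def by linarith
  qed
  define z where "z k = (INF n. a n k)" for k
  have zbdd: "bdd_below (range (\<lambda>n. a n k))" if "k\<in>K" for k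
    using alb[OF that] unfolding bdd_below_def by blast
  have z_le: "z k \<le> a n k" if "k\<in>K" for n k unfolding z_def by (rule cINF_lower[OF zbdd[OF that]]) simp
  have z_ev: "eventually (\<lambda>n. a n k < z k + e) sequentially" if kk: "k\<in>K" and ee: "0 < e" for k e
  proof -
    have lt: "(INF n. a n k) < (INF n. a n k) + e" using ee by simp
    have "\<exists>N. a N k < (INF n. a n k) + e" using iffD1[OF cINF_less_iff[OF UNIV_not_empty zbdd[OF kk]] lt] by simp
    then obtain N where N: "a N k < z k + e" unfolding z_def by blast
    show ?thesis unfolding eventually_sequentially
      using N aanti[OF kk] by (meson le_less_trans)
  qed
  have zL: "LipK z" unfolding LipK_def
  proof (intro ballI)
    fix k1 k2 assume k12: "k1 \<in> K" "k2 \<in> K"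
    show "z k2 - z k1 \<le> rho k1 k2"
    proof (rule field_le_epsilon)
      fix e :: real assume e: "0 < e"
      obtain N where N: "\<forall>n\<ge>N. a n k1 < z k1 + e" using z_ev[OF k12(1) e] unfolding eventually_sequentially by blast
      have "a N k2 - a N k1 \<le> rho k1 k2" using aL[of N] k12 unfolding LipK_def by blast
      then show "z k2 - z k1 \<le> rho k1 k2 + e" using N z_le[OF k12(2), of N] by force
    qed
  qed
  have zT: "\<forall>k\<in>K. T z k = z k + lstar"
  proof
    fix k assume k: "k \<in> K"
    have "T z k - lstar \<le> (INF n. a n k)"
    proof (rule cINF_greatest)
      fix n
      have "T z k \<le> T (a n) k" by (rule T_mono) (use z_le in blast)
      also have "\<dots> = a (Suc n) k + lstar" using aT[of n] by simp
      also have "\<dots> \<le> a n k + lstar" using adec[OF k, of n] by simp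
      finally show "T z k - lstar \<le> a n k" by simp
    qed simp
    then have le1: "T z k \<le> z k + lstar" unfolding z_def by simp
    have le2: "z k + lstar \<le> T z k"
    proof (rule field_le_epsilon)
      fix e :: real assume e: "0 < e"
      have ev: "eventually (\<lambda>n. \<forall>k'\<in>K. a n k' < z k' + e) sequentially"
        by (rule eventually_ball_finite[OF finK]) (use z_ev e in blast)
      then obtain n where n: "\<forall>k'\<in>K. a n k' < z k' + e" unfolding eventually_sequentially by blast
      have "T (a n) k \<le> T (\<lambda>v. z v + e) k" by (rule T_mono) (use n in force)
      also have "\<dots> = T z k + e" by (simp add: T_shift)
      finally have "a (Suc n) k + lstar \<le> T z k + e" using aT[of n] by simp
      then show "z k + lstar \<le> T z k + e" using z_le[OF k, of "Suc n"] by linarith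
    qed
    show "T z k = z k + lstar" using le1 le2 by linarith
  qed
  show ?thesis using zL zT by blast
qed

lemma const_lap:
  assumes zL: "LipK z" and zT: "\<forall>k\<in>K. T z k = z k + lstar"
  shows "\<forall>k\<in>K. laplacian V P (Fx z) k = lstar / eps"
proof -
  have lower: "lstar \<le> eps * laplacian V P (Fx z) k" if k: "k \<in> K" for k
  proof -
    have "T z k \<le> G z k + rho k k" unfolding T_def by (rule Fup_le[OF k])
    then show ?thesis using zT k rho_refl[OF kV[OF k]] unfolding G_def by simp
  qed
  show ?thesis
  proof
    fix k assume k: "k \<in> K"
    obtain k' where k': "k' \<in> K" "T z k = G z k' + rho k' k" unfolding T_def using Fup_attain by blast
    have l': "lstar \<le> eps * laplacian V P (Fx z) k'" by (rule lower[OF k'(1)])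
    have lip: "z k - z k' \<le> rho k' k" using zL k k'(1) unfolding LipK_def by blast
    have eq: "z k + lstar = z k' + eps * laplacian V P (Fx z) k' + rho k' k"
      using zT k k'(2) unfolding G_def by simp
    have tight: "Fx z k - Fx z k' = rho k' k" using eq l' lip Fx_K[OF k, of z] Fx_K[OF k'(1), of z] by linarith
    have "laplacian V P (Fx z) k \<le> laplacian V P (Fx z) k'"
      by (rule curv_tight[OF Fx_Lip1[OF zL] kV[OF k'(1)] kV[OF k] tight])
    then have "eps * laplacian V P (Fx z) k \<le> eps * laplacian V P (Fx z) k'"
      using eps_pos by (simp add: mult_left_mono)
    moreover have "eps * laplacian V P (Fx z) k' = lstar" using eq l' lip tight Fx_K[OF k, of z] Fx_K[OF k'(1), of z] by linarith
    ultimately have "eps * laplacian V P (Fx z) k = lstar" using lower[OF k] by linarith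
    then show "laplacian V P (Fx z) k = lstar / eps" using eps_pos by (simp add: eq_divide_eq mult.commute)
  qed
qed

lemma main:
  "\<exists>f C. Lip1 V d f \<and>
           (\<forall>x\<in>K. laplacian V P f x = C) \<and>
           (\<forall>x\<in>X. f x = Inf {g x | g. Lip1 V d g \<and> (\<forall>k\<in>K. g k = f k)}) \<and>
           (\<forall>y\<in>Y. f y = Sup {g y | g. Lip1 V d g \<and> (\<forall>k\<in>K. g k = f k)}) \<and>
           (\<forall>x\<in>X. laplacian V P f x \<ge> C) \<and>
           (\<forall>y\<in>Y. laplacian V P f y \<le> C)"
proof -
  obtain z where zL: "LipK z" and zT: "\<forall>k\<in>K. T z k = z k + lstar" using eigen by blast
  define f where "f = Fx z"
  define C where "C = lstar / eps"
  have fL: "Lip1 V d f" unfolding f_def by (rule Fx_Lip1[OF zL])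
  have fK: "f k = z k" if "k \<in> K" for k unfolding f_def by (rule Fx_K[OF that])
  have lapK: "\<forall>x\<in>K. laplacian V P f x = C" unfolding f_def C_def by (rule const_lap[OF zL zT])
  have fX: "f x = Flow z x" if "x \<in> X" for x unfolding f_def Fx_def using that XK by auto
  have fY: "f y = Fup z y" if "y \<in> Y" for y unfolding f_def using Fx_Y[OF that] .
  have infX: "\<forall>x\<in>X. f x = Inf {g x | g. Lip1 V d g \<and> (\<forall>k\<in>K. g k = f k)}"
  proof
    fix x assume x: "x \<in> X"
    have xV: "x \<in> V" using x XV by auto
    have "Inf {g x | g. Lip1 V d g \<and> (\<forall>k\<in>K. g k = f k)} = f x"
    proof (rule cInf_eq_minimum)
      show "f x \<in> {g x | g. Lip1 V d g \<and> (\<forall>k\<in>K. g k = f k)}" using fL by blast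
    next
      fix s assume "s \<in> {g x | g. Lip1 V d g \<and> (\<forall>k\<in>K. g k = f k)}"
      then obtain g where g: "Lip1 V d g" "\<forall>k\<in>K. g k = f k" "s = g x" by blast
      obtain k where k: "k \<in> K" "Flow z x = z k - rho k x" using Flow_attain by blast
      have "g k - g x \<le> rho x k" by (rule rho_upper[OF g(1) xV kV[OF k(1)]])
      moreover have "rho x k = rho k x" by (rule rho_sym[OF xV kV[OF k(1)]])
      ultimately show "f x \<le> s" using g(2,3) k fX[OF x] fK[OF k(1)] by simp
    qed
    then show "f x = Inf {g x | g. Lip1 V d g \<and> (\<forall>k\<in>K. g k = f k)}" by simp
  qed
  have supY: "\<forall>y\<in>Y. f y = Sup {g y | g. Lip1 V d g \<and> (\<forall>k\<in>K. g k = f k)}"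
  proof
    fix y assume y: "y \<in> Y"
    have yV: "y \<in> V" using y YV by auto
    have "Sup {g y | g. Lip1 V d g \<and> (\<forall>k\<in>K. g k = f k)} = f y"
    proof (rule cSup_eq_maximum)
      show "f y \<in> {g y | g. Lip1 V d g \<and> (\<forall>k\<in>K. g k = f k)}" using fL by blast
    next
      fix s assume "s \<in> {g y | g. Lip1 V d g \<and> (\<forall>k\<in>K. g k = f k)}"
      then obtain g where g: "Lip1 V d g" "\<forall>k\<in>K. g k = f k" "s = g y" by blast
      obtain k where k: "k \<in> K" "Fup z y = z k + rho k y" using Fup_attain by blast
      have "g y - g k \<le> rho k y" by (rule rho_upper[OF g(1) kV[OF k(1)] yV])
      then show "s \<le> f y" using g(2,3) k fY[OF y] fK[OF k(1)] by simp
    qed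
    then show "f y = Sup {g y | g. Lip1 V d g \<and> (\<forall>k\<in>K. g k = f k)}" by simp
  qed
  have geX: "\<forall>x\<in>X. laplacian V P f x \<ge> C"
  proof
    fix x assume x: "x \<in> X"
    have xV: "x \<in> V" using x XV by auto
    obtain k where k: "k \<in> K" "Flow z x = z k - rho k x" using Flow_attain by blast
    have "f k - f x = rho x k" using k fX[OF x] fK[OF k(1)] rho_sym[OF xV kV[OF k(1)]] by simp
    then have "laplacian V P f k \<le> laplacian V P f x" by (rule curv_tight[OF fL xV kV[OF k(1)]])
    then show "laplacian V P f x \<ge> C" using lapK k(1) by simp
  qed
  have leY: "\<forall>y\<in>Y. laplacian V P f y \<le> C"
  proof
    fix y assume y: "y \<in> Y"
    have yV: "y \<in> V" using y YV by auto
    obtain k where k: "k \<in> K" "Fup z y = z k + rho k y" using Fup_attain by blast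
    have "f y - f k = rho k y" using k fY[OF y] fK[OF k(1)] by simp
    then have "laplacian V P f y \<le> laplacian V P f k" by (rule curv_tight[OF fL kV[OF k(1)] yV])
    then show "laplacian V P f y \<le> C" using lapK k(1) by simp
  qed
  show ?thesis using fL lapK infX supY geX leY by blast
qed

end

theorem theorem5p1:
  fixes V X K Y :: "'a set" and P d :: "'a \<Rightarrow> 'a \<Rightarrow> real"
  assumes "rev_metric_markov_chain V P d"
    and "nonneg_ollivier_curv V P d"
    and "V = X \<union> K \<union> Y"
    and "X \<inter> K = {}" and "X \<inter> Y = {}" and "K \<inter> Y = {}"
    and "K \<noteq> {}" and "finite K"
    and "\<not> (\<exists>x\<in>X. \<exists>y\<in>Y. adj P x y)"
  shows "\<exists>f C. Lip1 V d f \<and>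
           (\<forall>x\<in>K. laplacian V P f x = C) \<and>
           (\<forall>x\<in>X. f x = Inf {g x | g. Lip1 V d g \<and> (\<forall>k\<in>K. g k = f k)}) \<and>
           (\<forall>y\<in>Y. f y = Sup {g y | g. Lip1 V d g \<and> (\<forall>k\<in>K. g k = f k)}) \<and>
           (\<forall>x\<in>X. laplacian V P f x \<ge> C) \<and>
           (\<forall>y\<in>Y. laplacian V P f y \<le> C)"
    using thm_setup.main[OF thm_setup.intro[OF assms]] .

end
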